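(* Let $U:\mathbb R^d\to\mathbb R$ be twice differentiable with $\nabla^2U(x)\succ mI_d$ for all $x$ (for some $m>0$), and let $x^*$ satisfy $\nabla U(x^* )=0$. If $x\sim\pi$ with density proportional to $e^{-U(x)}$, then \[\big(\mathbb E\|x-x^*\|^4\big)^{1/4}\le3^{1/4}\sqrt{\frac dm}\quad\text{and}\quad\big(\mathbb E\|x-x^*\|^8\big)^{1/8}\le105^{1/8}\sqrt{\frac dm}.\] *)

theory Defs
  imports "HOL-Analysis.Analysis"
begin

definition gibbs_expectation :: "('a::euclidean_space \<Rightarrow> real) \<Rightarrow> ('a \<Rightarrow> real) \<Rightarrow> real" where
  "gibbs_expectation U g =
     (\<integral>x. g x * exp (- U x) \<partial>lborel) / (\<integral>x. exp (- U x) \<partial>lborel)"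

definition loewner_gt_scaled_id :: "('a::real_inner \<Rightarrow> 'a) \<Rightarrow> real \<Rightarrow> bool" where
  "loewner_gt_scaled_id A m \<longleftrightarrow> (\<forall>v. v \<noteq> 0 \<longrightarrow> inner v (A v - m *\<^sub>R v) > 0)"

end

theory Submission
  imports Defs "HOL-Real_Asymp.Real_Asymp"
begin

lemma ray_ineq:
  fixes U :: "'a::euclidean_space \<Rightarrow> real" and gradU :: "'a \<Rightarrow> 'a" and hessU :: "'a \<Rightarrow> 'a \<Rightarrow> 'a"
  assumes grad: "\<And>x. (U has_derivative (\<lambda>h. inner (gradU x) h)) (at x)"
    and hess: "\<And>x. (gradU has_derivative hessU x) (at x)"
    and strong: "\<And>x v. v \<noteq> 0 \<Longrightarrow> inner v (hessU x v - m *\<^sub>R v) > 0"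
    and crit: "gradU xs = 0" and s: "1 \<le> s" and mpos: "m > 0"
  shows "U x + m * (s - 1) * norm (x - xs)^2 \<le> U (xs + s *\<^sub>R (x - xs))"
proof (cases "x = xs")
  case True then show ?thesis by simp
next
  case False
  define y where "y = x - xs"
  have y0: "y \<noteq> 0" using False by (simp add: y_def)
  define h where "h t = U (xs + t *\<^sub>R y)" for t
  define h' where "h' t = inner (gradU (xs + t *\<^sub>R y)) y" for t
  define h'' where "h'' t = inner (hessU (xs + t *\<^sub>R y) y) y" for t
  have lin: "linear (hessU z)" for z using hess[of z] has_derivative_linear by blast
  have dline: "((\<lambda>t. xs + t *\<^sub>R y) has_derivative (\<lambda>d. d *\<^sub>R y)) (at t)" for t
    by (auto intro!: derivative_eq_intros)
  have dh: "DERIV h t :> h' t" for t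
  proof -
    have "((\<lambda>t. U (xs + t *\<^sub>R y)) has_derivative (\<lambda>d. inner (gradU (xs + t *\<^sub>R y)) (d *\<^sub>R y))) (at t)"
      by (rule has_derivative_compose[OF dline grad])
    then show ?thesis unfolding h_def h'_def
      by (rule has_derivative_imp_has_field_derivative) (simp add: mult.commute)
  qed
  have dh': "DERIV h' t :> h'' t" for t
  proof -
    have "((\<lambda>t. gradU (xs + t *\<^sub>R y)) has_derivative (\<lambda>d. hessU (xs + t *\<^sub>R y) (d *\<^sub>R y))) (at t)"
      by (rule has_derivative_compose[OF dline hess])
    then have "((\<lambda>t. inner (gradU (xs + t *\<^sub>R y)) y) has_derivative (\<lambda>d. inner (hessU (xs + t *\<^sub>R y) (d *\<^sub>R y)) y)) (at t)"
      by (rule has_derivative_inner_left)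
    then show ?thesis unfolding h'_def h''_def
      by (rule has_derivative_imp_has_field_derivative) (simp add: linear_scale[OF lin])
  qed
  have h''ge: "h'' t \<ge> m * norm y ^ 2" for t
    using strong[OF y0, of "xs + t *\<^sub>R y"]
    by (simp add: h''_def inner_diff_right inner_commute power2_norm_eq_inner)
  have h'ge: "h' t \<ge> m * norm y ^ 2 * t" if "t \<ge> 0" for t
  proof (cases "t = 0")
    case True then show ?thesis by (simp add: h'_def crit)
  next
    case False
    with that have "0 < t" by simp
    define g where "g t = h' t - m * norm y ^ 2 * t" for t
    have "\<And>u. DERIV g u :> h'' u - m * norm y ^ 2"
      unfolding g_def by (auto intro!: derivative_eq_intros dh')
    from MVT2[OF \<open>0 < t\<close> this] obtain z where "g t - g 0 = (t - 0) * (h'' z - m * norm y ^ 2)" by blast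
    moreover have "(t - 0) * (h'' z - m * norm y ^ 2) \<ge> 0" using h''ge[of z] \<open>0 < t\<close> by simp
    moreover have "g 0 = 0" by (simp add: g_def h'_def crit)
    ultimately show ?thesis by (simp add: g_def)
  qed
  have "h 1 + m * (s - 1) * norm y ^ 2 \<le> h s"
  proof (cases "s = 1")
    case True then show ?thesis by simp
  next
    case False
    with s have "1 < s" by simp
    from MVT2[OF this, of h h'] dh obtain z where z: "1 < z" "h s - h 1 = (s - 1) * h' z" by blast
    have "m * norm y ^ 2 \<le> m * norm y ^ 2 * z"
      using z(1) mpos mult_left_mono[of 1 z "m * norm y ^ 2"] by simp
    also have "\<dots> \<le> h' z" using h'ge[of z] z(1) by simp
    finally have "(s - 1) * (m * norm y ^ 2) \<le> (s - 1) * h' z"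
      using \<open>1 < s\<close> by (intro mult_left_mono) auto
    then show ?thesis using z by (simp add: algebra_simps)
  qed
  then show ?thesis by (simp add: h_def y_def algebra_simps)
qed

lemma lim_aux:
  fixes c :: real assumes "c \<ge> 0"
  shows "(\<lambda>k::nat. (1 - exp (- c / (real k + 1))) * (real k + 1)) \<longlonglongrightarrow> c"
proof (cases "c = 0")
  case True then show ?thesis by simp
next
  case False
  with assms have "c > 0" by simp
  then show ?thesis by real_asymp
qed

lemma bern_aux:
  fixes t :: real assumes "0 < t" "t \<le> 1"
  shows "1 - inverse ((1 + t) ^ n) \<le> real n * t"
proof -
  have "1 - real n * t \<le> (1 - t) ^ n"
    using Bernoulli_inequality[of "-t" n] assms by simp
  also have "(1 - t) ^ n \<le> inverse ((1 + t) ^ n)"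
  proof -
    have "(1 - t) ^ n * (1 + t) ^ n = (1 - t^2) ^ n"
      by (simp add: power_mult_distrib[symmetric] power2_eq_square algebra_simps)
    also have "\<dots> \<le> 1" using assms by (intro power_le_one) (auto simp: power2_eq_square mult_le_one)
    finally have "(1 - t) ^ n * (1 + t) ^ n \<le> 1" .
    moreover have "(1 + t) ^ n > 0" using assms by simp
    ultimately show ?thesis by (simp add: field_simps)
  qed
  finally show ?thesis by simp
qed

lemma scale_aux:
  fixes U :: "'a::euclidean_space \<Rightarrow> real"
  assumes Um[measurable]: "U \<in> borel_measurable borel" and s: "s > 0"
  shows "(\<integral>\<^sup>+ x. ennreal (norm (x - xs) ^ j * exp (- U (xs + s *\<^sub>R (x - xs)))) \<partial>lborel)
     = ennreal (inverse (s ^ (DIM('a) + j))) * (\<integral>\<^sup>+ x. ennreal (norm (x - xs) ^ j * exp (- U x)) \<partial>lborel)"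
proof -
  let ?L = "\<integral>\<^sup>+ x. ennreal (norm (x - xs) ^ j * exp (- U (xs + s *\<^sub>R (x - xs)))) \<partial>lborel"
  define T where "T x = (1 - s) *\<^sub>R xs + s *\<^sub>R x" for x :: 'a
  have [measurable]: "T \<in> borel_measurable borel" unfolding T_def by measurable
  have TT: "T x = xs + s *\<^sub>R (x - xs)" for x by (simp add: T_def algebra_simps)
  have TT2: "T x - xs = s *\<^sub>R (x - xs)" for x by (simp add: T_def algebra_simps)
  have "(\<integral>\<^sup>+ x. ennreal (norm (x - xs) ^ j * exp (- U x)) \<partial>lborel)
      = (\<integral>\<^sup>+ x. ennreal (norm (x - xs) ^ j * exp (- U x)) \<partial>density (distr lborel borel T) (\<lambda>_. \<bar>s\<bar> ^ DIM('a)))"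
    using lborel_affine[of s "(1 - s) *\<^sub>R xs"] s unfolding T_def[symmetric, abs_def]
    by (metis (no_types, lifting) order_less_irrefl)
  also have "\<dots> = (\<integral>\<^sup>+ x. ennreal (\<bar>s\<bar> ^ DIM('a)) * ennreal (norm (x - xs) ^ j * exp (- U x)) \<partial>distr lborel borel T)"
    by (subst nn_integral_density) auto
  also have "\<dots> = (\<integral>\<^sup>+ x. ennreal (\<bar>s\<bar> ^ DIM('a)) * ennreal (norm (T x - xs) ^ j * exp (- U (T x))) \<partial>lborel)"
    by (subst nn_integral_distr) auto
  also have "\<dots> = (\<integral>\<^sup>+ x. ennreal (s ^ (DIM('a) + j)) * ennreal (norm (x - xs) ^ j * exp (- U (xs + s *\<^sub>R (x - xs)))) \<partial>lborel)"
    apply (intro nn_integral_cong)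
    using s by (simp add: TT TT2 power_mult_distrib power_add ennreal_mult'[symmetric] ennreal_mult[symmetric] mult_ac)
  also have "\<dots> = ennreal (s ^ (DIM('a) + j)) * ?L"
    by (subst nn_integral_cmult) auto
  finally have eq: "(\<integral>\<^sup>+ x. ennreal (norm (x - xs) ^ j * exp (- U x)) \<partial>lborel) = ennreal (s ^ (DIM('a) + j)) * ?L" .
  have "ennreal (inverse (s ^ (DIM('a) + j))) * ennreal (s ^ (DIM('a) + j)) = 1"
    using s by (simp add: ennreal_mult[symmetric])
  then show ?thesis unfolding eq by (simp add: mult.assoc[symmetric])
qed


lemma step_aux:
  fixes U :: "'a::euclidean_space \<Rightarrow> real"
  assumes Um[measurable]: "U \<in> borel_measurable borel" and mpos: "m > 0"
    and ray: "\<And>x s. 1 \<le> s \<Longrightarrow> U x + m * (s - 1) * norm (x - xs)^2 \<le> U (xs + s *\<^sub>R (x - xs))"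
  shows "ennreal m * (\<integral>\<^sup>+ x. ennreal (norm (x - xs) ^ (j + 2) * exp (- U x)) \<partial>lborel)
     \<le> ennreal (real (DIM('a) + j)) * (\<integral>\<^sup>+ x. ennreal (norm (x - xs) ^ j * exp (- U x)) \<partial>lborel)"
proof -
  define n where "n = DIM('a) + j"
  have npos: "real n > 0" unfolding n_def by (simp add: add_pos_nonneg)
  define M where "M = (\<integral>\<^sup>+ x. ennreal (norm (x - xs) ^ j * exp (- U x)) \<partial>lborel)"
  show ?thesis
  proof (cases "M = \<infinity>")
    case True
    then show ?thesis using npos unfolding M_def[symmetric] n_def[symmetric]
      by (simp add: ennreal_mult_top)
  next
    case False
    then obtain Mr where Mr: "M = ennreal Mr" "0 \<le> Mr" by (cases M) auto
    define f where "f t x = norm (x - xs) ^ j * exp (- U x) * (1 - exp (- m * t * norm (x - xs)^2))" for t x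
    have fnn: "f t x \<ge> 0" if "t \<ge> 0" for t x
      unfolding f_def using that mpos by (intro mult_nonneg_nonneg) auto
    have bound: "(\<integral>\<^sup>+ x. ennreal (f t x) \<partial>lborel) \<le> ennreal (real n * t * Mr)" if t: "0 < t" "t \<le> 1" for t
    proof -
      define s where "s = 1 + t"
      have s0: "s > 0" using t by (simp add: s_def)
      have sc: "(\<integral>\<^sup>+ x. ennreal (norm (x - xs) ^ j * exp (- U (xs + s *\<^sub>R (x - xs)))) \<partial>lborel)
          = ennreal (inverse (s ^ n)) * M"
        unfolding M_def n_def by (rule scale_aux[OF Um s0])
      have pw: "f t x + norm (x - xs) ^ j * exp (- U (xs + s *\<^sub>R (x - xs))) \<le> norm (x - xs) ^ j * exp (- U x)" for x
      proof -
        have "U x + m * t * norm (x - xs)^2 \<le> U (xs + s *\<^sub>R (x - xs))"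
          using ray[of s x] t by (simp add: s_def)
        then have "exp (- U (xs + s *\<^sub>R (x - xs))) \<le> exp (- U x) * exp (- m * t * norm (x - xs)^2)"
          by (simp add: exp_add[symmetric])
        then have "norm (x - xs) ^ j * exp (- U (xs + s *\<^sub>R (x - xs))) \<le> norm (x - xs) ^ j * (exp (- U x) * exp (- m * t * norm (x - xs)^2))"
          by (intro mult_left_mono) auto
        then show ?thesis unfolding f_def by (simp add: algebra_simps)
      qed
      have "(\<integral>\<^sup>+ x. ennreal (f t x) \<partial>lborel) + ennreal (inverse (s ^ n)) * M
          = (\<integral>\<^sup>+ x. ennreal (f t x) + ennreal (norm (x - xs) ^ j * exp (- U (xs + s *\<^sub>R (x - xs)))) \<partial>lborel)"
        unfolding sc[symmetric] f_def by (subst nn_integral_add) auto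
      also have "\<dots> \<le> M" unfolding M_def
        using pw fnn t by (intro nn_integral_mono) (simp add: ennreal_plus[symmetric] del: ennreal_plus)
      finally have le: "(\<integral>\<^sup>+ x. ennreal (f t x) \<partial>lborel) + ennreal (inverse (s ^ n) * Mr) \<le> ennreal Mr"
        using Mr s0 by (simp add: ennreal_mult)
      then have "(\<integral>\<^sup>+ x. ennreal (f t x) \<partial>lborel) \<noteq> \<infinity>" by (auto simp: top_add top_unique)
      then obtain a where a: "(\<integral>\<^sup>+ x. ennreal (f t x) \<partial>lborel) = ennreal a" "0 \<le> a"
        by (cases "(\<integral>\<^sup>+ x. ennreal (f t x) \<partial>lborel)") auto
      have "a + inverse (s ^ n) * Mr \<le> Mr"
        using le a Mr s0 by (simp add: ennreal_plus[symmetric] del: ennreal_plus)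
      then have "a \<le> (1 - inverse (s ^ n)) * Mr" by (simp add: algebra_simps)
      also have "\<dots> \<le> (real n * t) * Mr"
        using bern_aux[OF t, of n] Mr by (intro mult_right_mono) (auto simp: s_def)
      finally show ?thesis using a by simp
    qed
    define u where "u k x = ennreal (f (1 / (real k + 1)) x * (real k + 1))" for k x
    have [measurable]: "u k \<in> borel_measurable lborel" for k unfolding u_def f_def by measurable
    have ub: "(\<integral>\<^sup>+ x. u k x \<partial>lborel) \<le> ennreal (real n * Mr)" for k
    proof -
      have "(\<integral>\<^sup>+ x. u k x \<partial>lborel) = ennreal (real k + 1) * (\<integral>\<^sup>+ x. ennreal (f (1 / (real k + 1)) x) \<partial>lborel)"
      proof -
        have "u k x = ennreal (real k + 1) * ennreal (f (1 / (real k + 1)) x)" for x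
          using fnn[of "1 / (real k + 1)" x] unfolding u_def
          by (subst ennreal_mult[symmetric]) (auto simp: mult.commute)
        then have "(\<integral>\<^sup>+ x. u k x \<partial>lborel) = (\<integral>\<^sup>+ x. ennreal (real k + 1) * ennreal (f (1 / (real k + 1)) x) \<partial>lborel)"
          by simp
        also have "\<dots> = ennreal (real k + 1) * (\<integral>\<^sup>+ x. ennreal (f (1 / (real k + 1)) x) \<partial>lborel)"
          by (rule nn_integral_cmult) (simp add: f_def)
        finally show ?thesis .
      qed
      also have "\<dots> \<le> ennreal (real k + 1) * ennreal (real n * (1 / (real k + 1)) * Mr)"
        by (intro mult_left_mono bound) auto
      also have "\<dots> = ennreal (real n * Mr)"
      proof -
        have "(real k + 1) * (real n * (1 / (real k + 1)) * Mr) = real n * Mr" by (simp add: field_simps)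
        then show ?thesis using Mr npos by (subst ennreal_mult[symmetric]) auto
      qed
      finally show ?thesis .
    qed
    have lim: "(\<lambda>k. u k x) \<longlonglongrightarrow> ennreal (m * (norm (x - xs) ^ (j + 2) * exp (- U x)))" for x
    proof -
      have t1: "(\<lambda>k. (norm (x - xs) ^ j * exp (- U x)) * ((1 - exp (- (m * norm (x - xs)^2) / (real k + 1))) * (real k + 1)))
          \<longlonglongrightarrow> (norm (x - xs) ^ j * exp (- U x)) * (m * norm (x - xs)^2)"
        using mpos by (intro tendsto_mult_left lim_aux) auto
      have e2: "(\<lambda>k. (norm (x - xs) ^ j * exp (- U x)) * ((1 - exp (- (m * norm (x - xs)^2) / (real k + 1))) * (real k + 1)))
          = (\<lambda>k. f (1 / (real k + 1)) x * (real k + 1))"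
        by (rule ext) (simp add: f_def field_simps)
      have e3: "(norm (x - xs) ^ j * exp (- U x)) * (m * norm (x - xs)^2) = m * (norm (x - xs) ^ (j + 2) * exp (- U x))"
        by (simp add: power_add power2_eq_square algebra_simps)
      from t1 have "(\<lambda>k. f (1 / (real k + 1)) x * (real k + 1)) \<longlonglongrightarrow> m * (norm (x - xs) ^ (j + 2) * exp (- U x))"
        unfolding e2 e3 .
      then show ?thesis unfolding u_def by (rule tendsto_ennrealI)
    qed
    have "ennreal m * (\<integral>\<^sup>+ x. ennreal (norm (x - xs) ^ (j + 2) * exp (- U x)) \<partial>lborel)
        = (\<integral>\<^sup>+ x. ennreal (m * (norm (x - xs) ^ (j + 2) * exp (- U x))) \<partial>lborel)"
      using mpos by (subst nn_integral_cmult[symmetric]) (auto simp: ennreal_mult)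
    also have "\<dots> = (\<integral>\<^sup>+ x. liminf (\<lambda>k. u k x) \<partial>lborel)"
      using lim by (intro nn_integral_cong) (metis lim_imp_Liminf trivial_limit_sequentially)
    also have "\<dots> \<le> liminf (\<lambda>k. \<integral>\<^sup>+ x. u k x \<partial>lborel)"
      by (rule nn_integral_liminf) simp
    also have "\<dots> \<le> ennreal (real n * Mr)"
      using ub by (intro Liminf_le) auto
    also have "\<dots> = ennreal (real (DIM('a) + j)) * M"
      using Mr by (simp add: n_def ennreal_mult)
    finally show ?thesis unfolding M_def .
  qed
qed


lemma fin_aux:
  assumes "ennreal m * X \<le> ennreal c * ennreal r" "m > 0" "c \<ge> 0" "r \<ge> 0"
  shows "\<exists>x\<ge>0. X = ennreal x \<and> x \<le> (c / m) * r"
proof (cases X)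
  case (real x)
  then have "ennreal (m * x) \<le> ennreal (c * r)" using assms by (simp add: ennreal_mult)
  then have "m * x \<le> c * r" using assms by (subst (asm) ennreal_le_iff) auto
  then have "x \<le> (c / m) * r" using assms by (simp add: field_simps mult.commute)
  then show ?thesis using real by auto
next
  case top
  then show ?thesis using assms by (simp add: ennreal_mult_top ennreal_mult[symmetric] top_unique)
qed

lemma root_aux:
  fixes x c a :: real and k :: nat
  assumes "0 \<le> x" "x \<le> c * a ^ k" "0 < a" "0 \<le> c" "k > 0"
  shows "x powr (1 / (2 * real k)) \<le> c powr (1 / (2 * real k)) * sqrt a"
proof -
  have "x powr (1 / (2 * real k)) \<le> (c * a ^ k) powr (1 / (2 * real k))"
    using assms by (intro powr_mono2) auto
  also have "\<dots> = c powr (1 / (2 * real k)) * (a ^ k) powr (1 / (2 * real k))"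
    using assms by (simp add: powr_mult)
  also have "(a ^ k) powr (1 / (2 * real k)) = (a powr real k) powr (1 / (2 * real k))"
    using assms by (simp add: powr_realpow)
  also have "\<dots> = a powr (1/2)" using assms by (simp add: powr_powr)
  also have "\<dots> = sqrt a" using assms by (simp add: powr_half_sqrt)
  finally show ?thesis .
qed

theorem lemma12:
  fixes U :: "'a::euclidean_space \<Rightarrow> real"
    and gradU :: "'a \<Rightarrow> 'a"
    and hessU :: "'a \<Rightarrow> 'a \<Rightarrow> 'a"
    and m :: real and xstar :: 'a
  assumes m_pos: "m > 0"
    and grad: "\<And>x. (U has_derivative (\<lambda>h. inner (gradU x) h)) (at x)"
    and hess: "\<And>x. (gradU has_derivative hessU x) (at x)"
    and strong: "\<And>x. loewner_gt_scaled_id (hessU x) m"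
    and crit: "gradU xstar = 0"
  shows "gibbs_expectation U (\<lambda>x. norm (x - xstar) ^ 4) powr (1/4)
           \<le> 3 powr (1/4) * sqrt (real DIM('a) / m) \<and>
         gibbs_expectation U (\<lambda>x. norm (x - xstar) ^ 8) powr (1/8)
           \<le> 105 powr (1/8) * sqrt (real DIM('a) / m)"
proof -
  have "continuous_on UNIV U"
    using grad has_derivative_continuous continuous_at_imp_continuous_on by blast
  then have Um[measurable]: "U \<in> borel_measurable borel" by (rule borel_measurable_continuous_onI)
  have strong': "\<And>x v. v \<noteq> 0 \<Longrightarrow> inner v (hessU x v - m *\<^sub>R v) > 0"
    using strong unfolding loewner_gt_scaled_id_def by blast
  have ray: "\<And>x s. 1 \<le> s \<Longrightarrow> U x + m * (s - 1) * norm (x - xstar)^2 \<le> U (xstar + s *\<^sub>R (x - xstar))"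
    using ray_ineq[OF grad hess strong' crit _ m_pos] by blast
  define Mn where "Mn j = (\<integral>\<^sup>+ x. ennreal (norm (x - xstar) ^ j * exp (- U x)) \<partial>lborel)" for j
  define d where "d = real DIM('a)"
  have d1: "d \<ge> 1" unfolding d_def by simp
  have step: "ennreal m * Mn (j + 2) \<le> ennreal (d + real j) * Mn j" for j
    using step_aux[OF Um m_pos ray, of j] unfolding Mn_def d_def by simp
  have gibbs: "gibbs_expectation U (\<lambda>x. norm (x - xstar) ^ j) = enn2real (Mn j) / enn2real (Mn 0)" for j
    unfolding gibbs_expectation_def Mn_def
    by (subst (1 2) integral_eq_nn_integral) auto
  show ?thesis
  proof (cases "Mn 0 = \<infinity>")
    case True
    then have "gibbs_expectation U (\<lambda>x. norm (x - xstar) ^ j) = 0" for j by (simp add: gibbs)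
    then show ?thesis using m_pos by simp
  next
    case False
    then obtain r0 where r0: "Mn 0 = ennreal r0" "r0 \<ge> 0" by (cases "Mn 0") auto
    have s0: "ennreal m * Mn 2 \<le> ennreal d * ennreal r0" using step[of 0] r0 by (simp add: numeral_2_eq_2)
    from fin_aux[OF s0 m_pos] r0 d1 obtain r2 where
      r2: "r2 \<ge> 0" "Mn 2 = ennreal r2" "r2 \<le> (d / m) * r0" by auto
    have s2: "ennreal m * Mn 4 \<le> ennreal (d + 2) * ennreal r2" using step[of 2] r2 by simp
    from fin_aux[OF s2 m_pos] r2 d1 obtain r4 where
      r4: "r4 \<ge> 0" "Mn 4 = ennreal r4" "r4 \<le> ((d + 2) / m) * r2" by auto
    have s4: "ennreal m * Mn 6 \<le> ennreal (d + 4) * ennreal r4" using step[of 4] r4 by simp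
    from fin_aux[OF s4 m_pos] r4 d1 obtain r6 where
      r6: "r6 \<ge> 0" "Mn 6 = ennreal r6" "r6 \<le> ((d + 4) / m) * r4" by auto
    have s6: "ennreal m * Mn 8 \<le> ennreal (d + 6) * ennreal r6" using step[of 6] r6 by simp
    from fin_aux[OF s6 m_pos] r6 d1 obtain r8 where
      r8: "r8 \<ge> 0" "Mn 8 = ennreal r8" "r8 \<le> ((d + 6) / m) * r6" by auto
    define a where "a = d / m"
    have a0: "a > 0" using d1 m_pos by (simp add: a_def)
    have c2: "(d + 2) / m \<le> 3 * a" using d1 m_pos by (simp add: a_def field_simps)
    have c4: "(d + 4) / m \<le> 5 * a" using d1 m_pos by (simp add: a_def field_simps)
    have c6: "(d + 6) / m \<le> 7 * a" using d1 m_pos by (simp add: a_def field_simps)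
    have b2: "r2 \<le> a * r0" using r2 by (simp add: a_def)
    have b4: "r4 \<le> (3 * a^2) * r0"
    proof -
      have "r4 \<le> (3 * a) * r2" using r4 c2 r2(1) by (meson order_trans mult_right_mono)
      also have "\<dots> \<le> (3 * a) * (a * r0)" using b2 a0 by (intro mult_left_mono) auto
      finally show ?thesis by (simp add: power2_eq_square mult_ac)
    qed
    have b6: "r6 \<le> (15 * a^3) * r0"
    proof -
      have "r6 \<le> (5 * a) * r4" using r6 c4 r4(1) by (meson order_trans mult_right_mono)
      also have "\<dots> \<le> (5 * a) * ((3 * a^2) * r0)" using b4 a0 by (intro mult_left_mono) auto
      finally show ?thesis by (simp add: power3_eq_cube power2_eq_square mult_ac)
    qed
    have b8: "r8 \<le> (105 * a^4) * r0"
    proof -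
      have "r8 \<le> (7 * a) * r6" using r8 c6 r6(1) by (meson order_trans mult_right_mono)
      also have "\<dots> \<le> (7 * a) * ((15 * a^3) * r0)" using b6 a0 by (intro mult_left_mono) auto
      finally show ?thesis by (simp add: power3_eq_cube power2_eq_square mult_ac power4_eq_xxxx)
    qed
    have q: "r / r0 \<le> c * a ^ k" if "r \<le> (c * a ^ k) * r0" "0 \<le> r" "c \<ge> 0" for r c k
    proof (cases "r0 = 0")
      case True then show ?thesis using that a0 by simp
    next
      case False then have "r0 > 0" using r0 by simp
      then show ?thesis using that by (simp add: divide_le_eq)
    qed
    have E4: "gibbs_expectation U (\<lambda>x. norm (x - xstar) ^ 4) \<le> 3 * a ^ 2"
      using q[OF b4 r4(1)] r4 r0 by (simp add: gibbs)
    have E8: "gibbs_expectation U (\<lambda>x. norm (x - xstar) ^ 8) \<le> 105 * a ^ 4"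
      using q[OF b8 r8(1)] r8 r0 by (simp add: gibbs)
    have nn4: "gibbs_expectation U (\<lambda>x. norm (x - xstar) ^ 4) \<ge> 0"
      using r4 r0 by (simp add: gibbs)
    have nn8: "gibbs_expectation U (\<lambda>x. norm (x - xstar) ^ 8) \<ge> 0"
      using r8 r0 by (simp add: gibbs)
    have "gibbs_expectation U (\<lambda>x. norm (x - xstar) ^ 4) powr (1 / (2 * real (2::nat))) \<le> 3 powr (1 / (2 * real (2::nat))) * sqrt a"
      by (rule root_aux[OF nn4 E4 a0]) auto
    moreover
    have "gibbs_expectation U (\<lambda>x. norm (x - xstar) ^ 8) powr (1 / (2 * real (4::nat))) \<le> 105 powr (1 / (2 * real (4::nat))) * sqrt a"
      by (rule root_aux[OF nn8 E8 a0]) auto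
    ultimately show ?thesis by (simp add: a_def d_def)
  qed
qed

end
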